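(* Let $G=(V,E)$ be an undirected unweighted graph with $n$ vertices, let $k\ge 1$ be an integer, and let $H=(V,E')$ with $E'\subseteq E$ be a $k$-spanner of $G$ whose girth is at least $k+2$. Then there exists a total ordering $\sigma$ of $E$ such that the greedy algorithm run on input $\langle G,k\rangle$ with edge ordering $\sigma$ outputs exactly $H$.
   Context: All graphs are undirected and unweighted. For a graph $G=(V,E)$ with $n$ vertices and an integer $k$, a $k$-spanner of $G$ is a subgraph $H=(V,E')$, $E'\subseteq E$, such that $\mathrm{dist}_H(u,v)\le k\cdot \mathrm{dist}_G(u,v)$ for all $(u,v)\in V\times V$. The girth of a graph is the length of its shortest cycle ($+\infty$ if it is acyclic). The greedy algorithm on input $\langle G,k\rangle$ with a total ordering $\sigma=(e_1<\dots<e_m)$ of $E$: start with $H=(V,\emptyset)$; for $i=1,\dots,m$, with $e_i=(u,v)$, add $e_i$ to $H$ if $\mathrm{dist}_H(u,v)>k$ (current $H$), otherwise do nothing; output the final $H$. *)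

theory Defs
  imports Main "HOL-Library.Extended_Nat"
begin

definition graph :: "'a set \<Rightarrow> 'a set set \<Rightarrow> bool" where
  "graph V E \<longleftrightarrow> finite V \<and> E \<subseteq> {{u, v} | u v. u \<in> V \<and> v \<in> V \<and> u \<noteq> v}"

text \<open>A walk in edge set F, given as a nonempty vertex list; its length is length xs - 1.\<close>
definition walk :: "'a set set \<Rightarrow> 'a list \<Rightarrow> bool" where
  "walk F xs \<longleftrightarrow> xs \<noteq> [] \<and> (\<forall>i. Suc i < length xs \<longrightarrow> {xs ! i, xs ! Suc i} \<in> F)"

text \<open>Distance in the graph with edge set F (infinity if disconnected).\<close>
definition gdist :: "'a set set \<Rightarrow> 'a \<Rightarrow> 'a \<Rightarrow> enat" where
  "gdist F u v = (INF xs \<in> {xs. walk F xs \<and> hd xs = u \<and> last xs = v}. enat (length xs - 1))"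

definition is_spanner :: "'a set \<Rightarrow> 'a set set \<Rightarrow> nat \<Rightarrow> 'a set set \<Rightarrow> bool" where
  "is_spanner V E k E' \<longleftrightarrow> E' \<subseteq> E \<and>
     (\<forall>u \<in> V. \<forall>v \<in> V. gdist E' u v \<le> enat k * gdist E u v)"

text \<open>Cycles: closed walks with at least 3 edges whose vertices are distinct apart from the
  repeated endpoint.\<close>
definition is_cycle :: "'a set set \<Rightarrow> 'a list \<Rightarrow> bool" where
  "is_cycle F xs \<longleftrightarrow> walk F xs \<and> length xs \<ge> 4 \<and> hd xs = last xs \<and> distinct (tl xs)"

definition girth :: "'a set set \<Rightarrow> enat" where
  "girth F = (INF xs \<in> {xs. is_cycle F xs}. enat (length xs - 1))"

fun greedy_aux :: "nat \<Rightarrow> 'a set list \<Rightarrow> 'a set set \<Rightarrow> 'a set set" where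
  "greedy_aux k [] H = H"
| "greedy_aux k (e # es) H =
     greedy_aux k es (if (\<exists>u v. e = {u, v} \<and> gdist H u v > enat k) then insert e H else H)"

definition greedy :: "nat \<Rightarrow> 'a set list \<Rightarrow> 'a set set" where
  "greedy k \<sigma> = greedy_aux k \<sigma> {}"

end

theory Submission
  imports Defs
begin

lemma walk_single[simp]: "walk F [x]"
  by (simp add: walk_def)

lemma walk_Cons2[simp]: "walk F (x # y # ys) \<longleftrightarrow> {x, y} \<in> F \<and> walk F (y # ys)"
  unfolding walk_def
proof (intro iffI conjI allI impI; (elim conjE)?)
  assume h: "\<forall>i. Suc i < length (x # y # ys) \<longrightarrow> {(x # y # ys) ! i, (x # y # ys) ! Suc i} \<in> F"
  show "{x, y} \<in> F" using h[rule_format, of 0] by simp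
  show "y # ys \<noteq> []" by simp
  fix i assume "Suc i < length (y # ys)"
  then show "{(y # ys) ! i, (y # ys) ! Suc i} \<in> F" using h[rule_format, of "Suc i"] by simp
next
  fix i
  assume a: "{x, y} \<in> F" "\<forall>i. Suc i < length (y # ys) \<longrightarrow> {(y # ys) ! i, (y # ys) ! Suc i} \<in> F"
    and i: "Suc i < length (x # y # ys)"
  show "{(x # y # ys) ! i, (x # y # ys) ! Suc i} \<in> F"
  proof (cases i)
    case 0 then show ?thesis using a by simp
  next
    case (Suc j) then show ?thesis using a(2)[rule_format, of j] i by simp
  qed
qed simp

lemma walk_Cons_Cons: "walk F (x # xs) \<Longrightarrow> xs \<noteq> [] \<Longrightarrow> {x, hd xs} \<in> F \<and> walk F xs"
  by (cases xs) auto

lemma walk_mono: "walk F xs \<Longrightarrow> F \<subseteq> G \<Longrightarrow> walk G xs"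
  unfolding walk_def by blast

lemma walk_append: "walk F (xs @ y # zs) \<longleftrightarrow> walk F (xs @ [y]) \<and> walk F (y # zs)"
proof (induction xs)
  case Nil then show ?case by simp
next
  case (Cons a xs)
  then show ?case by (cases xs) auto
qed

lemma walk_distinct:
  "walk F p \<Longrightarrow> \<exists>q. walk F q \<and> hd q = hd p \<and> last q = last p \<and> distinct q \<and> length q \<le> length p"
proof (induction "length p" arbitrary: p rule: less_induct)
  case less
  show ?case
  proof (cases "distinct p")
    case True then show ?thesis using less.prems by blast
  next
    case False
    then obtain xs ys zs y where p: "p = xs @ [y] @ ys @ [y] @ zs"
      using not_distinct_decomp by blast
    define p' where "p' = xs @ [y] @ zs"
    have "walk F (xs @ y # (ys @ y # zs))" using less.prems p by simp
    then have w1: "walk F (xs @ [y]) \<and> walk F (y # ys @ y # zs)"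
      by (rule walk_append[THEN iffD1])
    then have "walk F ((y # ys) @ y # zs)" by simp
    then have "walk F ((y # ys) @ [y]) \<and> walk F (y # zs)"
      by (rule walk_append[THEN iffD1])
    then have "walk F (xs @ y # zs)" using w1 by (intro walk_append[THEN iffD2]) simp
    then have "walk F p'" unfolding p'_def by simp
    moreover have "hd p' = hd p" "last p' = last p" unfolding p p'_def
      by (cases xs; simp) (cases zs; simp)
    moreover have "length p' < length p" unfolding p p'_def by simp
    ultimately obtain q where "walk F q \<and> hd q = hd p' \<and> last q = last p' \<and> distinct q \<and> length q \<le> length p'"
      using less.hyps[of p'] by blast
    then show ?thesis using \<open>hd p' = hd p\<close> \<open>last p' = last p\<close> \<open>length p' < length p\<close>
      by (intro exI[of _ q]) auto
  qed
qed

lemma gdist_le_walk: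
  assumes "gdist F u v \<le> enat k"
  shows "\<exists>p. walk F p \<and> hd p = u \<and> last p = v \<and> length p - 1 \<le> k"
proof -
  let ?S = "(\<lambda>xs. enat (length xs - 1)) ` {xs. walk F xs \<and> hd xs = u \<and> last xs = v}"
  have g: "gdist F u v = Inf ?S" unfolding gdist_def by simp
  have "?S \<noteq> {}"
  proof
    assume "?S = {}"
    then have "gdist F u v = \<infinity>" unfolding g by (simp add: Inf_enat_def)
    then show False using assms by simp
  qed
  then obtain y where "y \<in> ?S" by blast
  then have "(LEAST x. x \<in> ?S) \<in> ?S" by (rule LeastI)
  then have "Inf ?S \<in> ?S" using \<open>?S \<noteq> {}\<close> by (simp only: Inf_enat_def if_False)
  then obtain p where "walk F p" "hd p = u" "last p = v" "gdist F u v = enat (length p - 1)"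
    unfolding g by auto
  then show ?thesis using assms by auto
qed

lemma gdist_edge: "{u, v} \<in> F \<Longrightarrow> gdist F u v \<le> 1"
proof -
  assume "{u, v} \<in> F"
  then have "walk F [u, v]" by simp
  then have "gdist F u v \<le> enat (length [u, v] - 1)"
    unfolding gdist_def by (intro INF_lower) auto
  then show ?thesis by (simp add: one_enat_def)
qed

lemma greedy_E':
  assumes "distinct xs" "set xs \<subseteq> E'" "H \<subseteq> E'" "H \<inter> set xs = {}"
    and edge: "\<And>e. e \<in> E' \<Longrightarrow> \<exists>u v. e = {u, v} \<and> u \<noteq> v"
    and gir: "girth E' \<ge> enat (k + 2)"
  shows "greedy_aux k xs H = H \<union> set xs"
  using assms(1-4)
proof (induction xs arbitrary: H)
  case Nil then show ?case by simp
next
  case (Cons e xs)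
  have eE: "e \<in> E'" "e \<notin> H" using Cons.prems by auto
  obtain u v where uv: "e = {u, v}" "u \<noteq> v" using edge[OF eE(1)] by blast
  have "gdist H u v > enat k"
  proof (rule ccontr)
    assume "\<not> gdist H u v > enat k"
    then have "gdist H u v \<le> enat k" by simp
    from gdist_le_walk[OF this] obtain p where p: "walk H p" "hd p = u" "last p = v" "length p - 1 \<le> k"
      by blast
    from walk_distinct[OF p(1)] obtain q where q0: "walk H q" "hd q = hd p" "last q = last p" "distinct q" "length q \<le> length p"
      by blast
    have q: "walk H q" "hd q = u" "last q = v" "distinct q" "length q \<le> length p"
      using q0 p(2,3) by simp_all
    have qne: "q \<noteq> []" using q(1) unfolding walk_def by (rule conjunct1)
    have l3: "length q \<ge> 3"
    proof (rule ccontr)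
      assume nl: "\<not> length q \<ge> 3"
      have "length q \<noteq> 0" using qne by simp
      then have "length q = 1 \<or> length q = 2" using nl by linarith
      then consider "length q = 1" | "length q = 2" by blast
      then show False
      proof cases
        case 1 then obtain a where "q = [a]" by (cases q) auto
        then show False using q uv by simp
      next
        case 2 then obtain a b where "q = [a, b]" by (cases q; cases "tl q") auto
        then have "q = [u, v]" using q(2,3) by simp
        then have "{u, v} \<in> H" using q(1) by simp
        then show False using uv(1) eE(2) by simp
      qed
    qed
    have "walk E' q" using q(1) Cons.prems(3) walk_mono by blast
    moreover have "{v, hd q} \<in> E'" using q(2) uv(1) eE(1) by (metis insert_commute)
    ultimately have "walk E' (v # q)" using qne
      by (cases q) simp_all
    moreover have "hd (v # q) = last (v # q)" using q(3) qne by simp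
    moreover have "distinct (tl (v # q))" using q(4) by simp
    moreover have "length (v # q) \<ge> 4" using l3 by simp
    ultimately have "is_cycle E' (v # q)" unfolding is_cycle_def by simp
    then have "girth E' \<le> enat (length (v # q) - 1)"
      unfolding girth_def by (intro INF_lower) auto
    then have "girth E' \<le> enat (length q)" by simp
    then have "enat (k + 2) \<le> enat (length q)" using order_trans[OF gir] by blast
    moreover have "length q \<le> k + 1" using p(4) q(5) by simp
    ultimately show False by simp
  qed
  then have c: "\<exists>u v. e = {u, v} \<and> gdist H u v > enat k" using uv(1) by blast
  have "greedy_aux k (e # xs) H = greedy_aux k xs (insert e H)"
    by (simp only: greedy_aux.simps if_P[OF c])
  also have "\<dots> = insert e H \<union> set xs"
    using Cons.prems by (intro Cons.IH) auto
  finally show ?case by simp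
qed

lemma greedy_rest:
  assumes "\<And>e u v. e \<in> set xs \<Longrightarrow> e = {u, v} \<Longrightarrow> gdist H u v \<le> enat k"
  shows "greedy_aux k xs H = H"
  using assms
proof (induction xs)
  case Nil then show ?case by simp
next
  case (Cons e xs)
  have nc: "\<not> (\<exists>u v. e = {u, v} \<and> gdist H u v > enat k)"
    using Cons.prems[of e] by (auto simp: not_less)
  have "greedy_aux k (e # xs) H = greedy_aux k xs H"
    by (simp only: greedy_aux.simps if_not_P[OF nc])
  then show ?case using Cons by simp
qed

lemma greedy_app: "greedy_aux k (xs @ ys) H = greedy_aux k ys (greedy_aux k xs H)"
  by (induction xs arbitrary: H) (simp_all only: greedy_aux.simps append_Cons append_Nil)

theorem proposition1p3:
  fixes V :: "'a set" and E E' :: "'a set set" and k :: nat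
  assumes "graph V E"
    and "k \<ge> 1"
    and "is_spanner V E k E'"
    and "girth E' \<ge> enat (k + 2)"
  shows "\<exists>\<sigma>. distinct \<sigma> \<and> set \<sigma> = E \<and> greedy k \<sigma> = E'"
proof -
  have finV: "finite V" and Esub: "E \<subseteq> {{u, v} | u v. u \<in> V \<and> v \<in> V \<and> u \<noteq> v}"
    using assms(1) unfolding graph_def by auto
  have "E \<subseteq> Pow V" using Esub by auto
  then have finE: "finite E" using finV by (meson finite_Pow_iff finite_subset)
  have E'E: "E' \<subseteq> E" using assms(3) unfolding is_spanner_def by simp
  have sp: "\<And>u v. u \<in> V \<Longrightarrow> v \<in> V \<Longrightarrow> gdist E' u v \<le> enat k * gdist E u v"
    using assms(3) unfolding is_spanner_def by simp
  obtain xs1 where x1: "distinct xs1" "set xs1 = E'"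
    using finite_distinct_list[of E'] finite_subset[OF E'E finE] by blast
  obtain xs2 where x2: "distinct xs2" "set xs2 = E - E'"
    using finite_distinct_list[of "E - E'"] finE by blast
  have edge: "\<exists>u v. e = {u, v} \<and> u \<noteq> v" if "e \<in> E'" for e
  proof -
    have "e \<in> E" using that E'E by (rule subsetD[rotated])
    then have "e \<in> {{u, v} | u v. u \<in> V \<and> v \<in> V \<and> u \<noteq> v}" by (rule subsetD[OF Esub])
    then show ?thesis by blast
  qed
  have g1: "greedy_aux k xs1 {} = E'"
    using greedy_E'[OF x1(1) _ _ _ edge assms(4)] x1(2) by simp
  have g2: "greedy_aux k xs2 E' = E'"
  proof (rule greedy_rest)
    fix e u v assume e: "e \<in> set xs2" "e = {u, v}"
    then have "e \<in> E" using x2 by auto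
    then have "e \<in> {{u, v} | u v. u \<in> V \<and> v \<in> V \<and> u \<noteq> v}" by (rule subsetD[OF Esub])
    then obtain a b where ab: "e = {a, b}" "a \<in> V" "b \<in> V" by blast
    have "u \<in> e" "v \<in> e" using e(2) by auto
    then have "u \<in> {a, b}" "v \<in> {a, b}" using ab(1) by simp_all
    then have uvV: "u \<in> V" "v \<in> V" using ab by auto
    have "{u, v} \<in> E" using \<open>e \<in> E\<close> e(2) by simp
    then have "gdist E u v \<le> 1" by (rule gdist_edge)
    then have "enat k * gdist E u v \<le> enat k * 1" by (intro mult_left_mono) auto
    then show "gdist E' u v \<le> enat k" using sp[OF uvV] by simp
  qed
  show ?thesis
  proof (intro exI conjI)
    show "distinct (xs1 @ xs2)" using x1 x2 by (simp add: distinct_append)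
    show "set (xs1 @ xs2) = E" using x1 x2 E'E by auto
    show "greedy k (xs1 @ xs2) = E'" unfolding greedy_def greedy_app g1 g2 ..
  qed
qed

end
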